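(* The set of all bicoloured noncrossing configurations (of all sizes $n\ge1$), together with the composition maps $\circ_i$ described in the context and the unique bicoloured noncrossing configuration of size $1$ as unit, forms a (nonsymmetric) operad, where the arity of a configuration is its size.
   Context: For $n\ge2$, a bicoloured noncrossing configuration (BNC) of size $n$ is a regular polygon with $n+1$ vertices numbered $1,\dots,n+1$ clockwise, together with two disjoint sets of arcs, a set of blue arcs and a set of red arcs. An arc is a pair $(i,j)$ with $1\le i<j\le n+1$. The arcs $(i,i+1)$, $1\le i\le n$, are the edges ($(i,i+1)$ is the $i$th edge), $(1,n+1)$ is the base, and all other arcs are diagonals. The required conditions are: no two coloured (blue or red) arcs cross, where $(i,j)$ and $(k,l)$ cross iff $i<k<j<l$ or $k<i<l<j$; and every red arc is a diagonal. An arc that is neither blue nor red is uncoloured. By convention there is exactly one BNC of size $1$: a segment $(1,2)$ that is blue; it serves both as its unique ($1$st) edge and as its base. Composition: let $\mathfrak C$ and $\mathfrak D$ be BNCs of sizes $n$ and $m$, and let $i\in[n]$. Then $\mathfrak E=\mathfrak C\circ_i\mathfrak D$ is the BNC of size $n+m-1$ obtained by gluing the base of $\mathfrak D$ onto the $i$th edge of $\mathfrak C$ (and reshaping into a regular polygon). Concretely, an arc $(a,b)$ of $\mathfrak C$ becomes the arc $(\sigma(a),\sigma(b))$ of $\mathfrak E$, where $\sigma(v)=v$ if $v\le i$ and $\sigma(v)=v+m-1$ if $v>i$. An arc $(a,b)$ of $\mathfrak D$ becomes $(a+i-1,b+i-1)$. All these arcs keep their colours, except the arc $(i,i+m)$ of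 $\mathfrak E$ (the common image of the $i$th edge of $\mathfrak C$ and the base of $\mathfrak D$). This arc is red if both the $i$th edge of $\mathfrak C$ and the base of $\mathfrak D$ are uncoloured, blue if both are blue, and uncoloured otherwise. *)

theory Defs
  imports Main
begin

record bnc =
  sz :: nat
  blue :: "(nat \<times> nat) set"
  red :: "(nat \<times> nat) set"

definition arcs :: "nat \<Rightarrow> (nat \<times> nat) set" where
  "arcs n = {(i, j). 1 \<le> i \<and> i < j \<and> j \<le> n + 1}"

definition crossing :: "nat \<times> nat \<Rightarrow> nat \<times> nat \<Rightarrow> bool" where
  "crossing p q = (case p of (i, j) \<Rightarrow> case q of (k, l) \<Rightarrow>
      (i < k \<and> k < j \<and> j < l) \<or> (k < i \<and> i < l \<and> l < j))"

text \<open>Diagonals of a polygon of size n: arcs that are neither edges (i,i+1) nor the base (1,n+1).\<close>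
definition diagonals :: "nat \<Rightarrow> (nat \<times> nat) set" where
  "diagonals n = {(i, j) \<in> arcs n. j \<noteq> i + 1 \<and> (i, j) \<noteq> (1, n + 1)}"

definition bnc_unit :: bnc where
  "bnc_unit = \<lparr>sz = 1, blue = {(1, 2)}, red = {}\<rparr>"

definition is_bnc :: "bnc \<Rightarrow> bool" where
  "is_bnc C \<longleftrightarrow>
     (sz C = 1 \<and> C = bnc_unit) \<or>
     (sz C \<ge> 2 \<and> blue C \<subseteq> arcs (sz C) \<and> red C \<subseteq> arcs (sz C) \<and>
      blue C \<inter> red C = {} \<and>
      (\<forall>p \<in> blue C \<union> red C. \<forall>q \<in> blue C \<union> red C. \<not> crossing p q) \<and>
      red C \<subseteq> diagonals (sz C))"

definition BNC :: "bnc set" where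
  "BNC = {C. is_bnc C}"

text \<open>Partial composition C \<circ>_i D: glue the base of D onto the i-th edge of C.\<close>
definition bnc_comp :: "bnc \<Rightarrow> nat \<Rightarrow> bnc \<Rightarrow> bnc" where
  "bnc_comp C i D =
    (let n = sz C; m = sz D;
         \<sigma> = (\<lambda>v. if v \<le> i then v else v + m - 1);
         mapC = (\<lambda>(a, b). (\<sigma> a, \<sigma> b));
         mapD = (\<lambda>(a, b). (a + i - 1, b + i - 1));
         eC = (i, i + 1); bD = (1, m + 1); s = (i, i + m)
     in \<lparr>sz = n + m - 1,
         blue = mapC ` (blue C - {eC}) \<union> mapD ` (blue D - {bD}) \<union>
                (if eC \<in> blue C \<and> bD \<in> blue D then {s} else {}),
         red = mapC ` (red C - {eC}) \<union> mapD ` (red D - {bD}) \<union>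
                (if eC \<notin> blue C \<union> red C \<and> bD \<notin> blue D \<union> red D then {s} else {})\<rparr>)"

definition ns_operad :: "'a set \<Rightarrow> ('a \<Rightarrow> nat) \<Rightarrow> ('a \<Rightarrow> nat \<Rightarrow> 'a \<Rightarrow> 'a) \<Rightarrow> 'a \<Rightarrow> bool" where
  "ns_operad X ar cmp u \<longleftrightarrow>
     u \<in> X \<and> ar u = 1 \<and>
     (\<forall>x\<in>X. \<forall>y\<in>X. \<forall>i. 1 \<le> i \<and> i \<le> ar x \<longrightarrow>
        cmp x i y \<in> X \<and> ar (cmp x i y) = ar x + ar y - 1) \<and>
     (\<forall>x\<in>X. cmp u 1 x = x) \<and>
     (\<forall>x\<in>X. \<forall>i. 1 \<le> i \<and> i \<le> ar x \<longrightarrow> cmp x i u = x) \<and>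
     (\<forall>x\<in>X. \<forall>y\<in>X. \<forall>z\<in>X. \<forall>i j. 1 \<le> i \<and> i \<le> ar x \<and> 1 \<le> j \<and> j \<le> ar y \<longrightarrow>
        cmp (cmp x i y) (i + j - 1) z = cmp x i (cmp y j z)) \<and>
     (\<forall>x\<in>X. \<forall>y\<in>X. \<forall>z\<in>X. \<forall>i j. 1 \<le> i \<and> i < j \<and> j \<le> ar x \<longrightarrow>
        cmp (cmp x i y) (j + ar y - 1) z = cmp (cmp x j z) i y)"

end

theory Submission
  imports Defs
begin

declare [[smt_timeout = 1000, smt_reconstruction_step_timeout = 1000]]


definition wf :: "bnc \<Rightarrow> bool" where
 "wf C \<longleftrightarrow> sz C \<ge> 1 \<and> blue C \<subseteq> arcs (sz C) \<and> red C \<subseteq> arcs (sz C)"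

lemma sz_comp[simp]: "sz (bnc_comp C i D) = sz C + sz D - 1"
  by (simp add: bnc_comp_def Let_def)

lemma mem_img_inv:
  assumes "\<And>p. g (f p) = p" 
  shows "x \<in> f ` S \<longleftrightarrow> (f (g x) = x \<and> g x \<in> S)"
  using assms by (metis image_eqI imageE)

lemma sig_inv: "1 \<le> (m::nat) \<Longrightarrow> (if (if a \<le> i then a else a + m - 1) \<le> i then (if a \<le> i then a else a + m - 1) else (if a \<le> i then a else a + m - 1) + 1 - m) = a"
  by auto

lemma sig_rng: "1 \<le> (m::nat) \<Longrightarrow> ((if (if c \<le> i then c else c + 1 - m) \<le> i then (if c \<le> i then c else c + 1 - m) else (if c \<le> i then c else c + 1 - m) + m - 1) = c)
  \<longleftrightarrow> (c \<le> i \<or> i + m \<le> c)"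
  by auto

lemma mem_mapC:
  fixes m i c d :: nat
  assumes "m \<ge> 1"
  shows "((c,d) \<in> (\<lambda>(a, b). (if a \<le> i then a else a + m - 1, if b \<le> i then b else b + m - 1)) ` S)
    \<longleftrightarrow> ((c \<le> i \<or> i+m \<le> c) \<and> (d \<le> i \<or> i+m \<le> d) \<and>
         (if c \<le> i then c else c + 1 - m, if d \<le> i then d else d + 1 - m) \<in> S)"
  apply (subst mem_img_inv[where g="\<lambda>(c,d). (if c \<le> i then c else c + 1 - m, if d \<le> i then d else d + 1 - m)"])
  subgoal for p using assms sig_inv[OF assms] by (cases p) simp
  using assms sig_rng[OF assms, of c i] sig_rng[OF assms, of d i] by simp

lemma mem_mapD:
  fixes m i c d :: nat
  assumes "i \<ge> 1" "S \<subseteq> arcs m"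
  shows "((c,d) \<in> (\<lambda>(a, b). (a + i - 1, b + i - 1)) ` S)
    \<longleftrightarrow> (i \<le> c \<and> i \<le> d \<and> (c + 1 - i, d + 1 - i) \<in> S)"
proof 
  assume "(c,d) \<in> (\<lambda>(a, b). (a + i - 1, b + i - 1)) ` S"
  then obtain a b where "(a,b) \<in> S" "c = a + i - 1" "d = b + i - 1" by auto
  moreover have "1 \<le> a" "1 \<le> b" using assms(2) \<open>(a,b) \<in> S\<close> unfolding arcs_def by auto
  ultimately show "i \<le> c \<and> i \<le> d \<and> (c + 1 - i, d + 1 - i) \<in> S" using assms(1) by auto
next
  assume "i \<le> c \<and> i \<le> d \<and> (c + 1 - i, d + 1 - i) \<in> S"
  then show "(c,d) \<in> (\<lambda>(a, b). (a + i - 1, b + i - 1)) ` S" using assms(1)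
    by (auto simp: image_iff intro!: bexI[where x="(c + 1 - i, d + 1 - i)"])
qed

definition Bi :: "bnc \<Rightarrow> int \<Rightarrow> int \<Rightarrow> bool" where
  "Bi C a b \<longleftrightarrow> 0 \<le> a \<and> 0 \<le> b \<and> (nat a, nat b) \<in> blue C"
definition Ri :: "bnc \<Rightarrow> int \<Rightarrow> int \<Rightarrow> bool" where
  "Ri C a b \<longleftrightarrow> 0 \<le> a \<and> 0 \<le> b \<and> (nat a, nat b) \<in> red C"

lemma blue_nat: "(a,b) \<in> blue C \<longleftrightarrow> Bi C (int a) (int b)" by (simp add: Bi_def)
lemma red_nat: "(a,b) \<in> red C \<longleftrightarrow> Ri C (int a) (int b)" by (simp add: Ri_def)

lemma blue_comp_nat:
  fixes c d i :: nat
  assumes "1 \<le> i" "1 \<le> sz D" "blue D \<subseteq> arcs (sz D)"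
  shows "(c,d) \<in> blue (bnc_comp C i D) \<longleftrightarrow>
   ((c \<le> i \<or> i + sz D \<le> c) \<and> (d \<le> i \<or> i + sz D \<le> d) \<and>
     (if c \<le> i then c else c + 1 - sz D, if d \<le> i then d else d + 1 - sz D) \<in> blue C \<and>
     (if c \<le> i then c else c + 1 - sz D, if d \<le> i then d else d + 1 - sz D) \<noteq> (i, i + 1))
   \<or> (i \<le> c \<and> i \<le> d \<and> (c + 1 - i, d + 1 - i) \<in> blue D \<and> (c + 1 - i, d + 1 - i) \<noteq> (1, sz D + 1))
   \<or> ((c, d) = (i, i + sz D) \<and> (i, i + 1) \<in> blue C \<and> (1, sz D + 1) \<in> blue D)"
proof -
  have sub: "blue D - {(1, sz D + 1)} \<subseteq> arcs (sz D)" using assms(3) by blast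
  show ?thesis
    unfolding bnc_comp_def Let_def bnc.select_convs Un_iff
    unfolding mem_mapC[OF assms(2)] mem_mapD[OF assms(1) sub] Diff_iff singleton_iff
    by auto
qed

lemma red_comp_nat:
  fixes c d i :: nat
  assumes "1 \<le> i" "1 \<le> sz D" "red D \<subseteq> arcs (sz D)"
  shows "(c,d) \<in> red (bnc_comp C i D) \<longleftrightarrow>
   ((c \<le> i \<or> i + sz D \<le> c) \<and> (d \<le> i \<or> i + sz D \<le> d) \<and>
     (if c \<le> i then c else c + 1 - sz D, if d \<le> i then d else d + 1 - sz D) \<in> red C \<and>
     (if c \<le> i then c else c + 1 - sz D, if d \<le> i then d else d + 1 - sz D) \<noteq> (i, i + 1))
   \<or> (i \<le> c \<and> i \<le> d \<and> (c + 1 - i, d + 1 - i) \<in> red D \<and> (c + 1 - i, d + 1 - i) \<noteq> (1, sz D + 1))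
   \<or> ((c, d) = (i, i + sz D) \<and> (i, i + 1) \<notin> blue C \<and> (i, i + 1) \<notin> red C \<and>
        (1, sz D + 1) \<notin> blue D \<and> (1, sz D + 1) \<notin> red D)"
proof -
  have sub: "red D - {(1, sz D + 1)} \<subseteq> arcs (sz D)" using assms(3) by blast
  show ?thesis
    unfolding bnc_comp_def Let_def bnc.select_convs Un_iff
    unfolding mem_mapC[OF assms(2)] mem_mapD[OF assms(1) sub] Diff_iff singleton_iff
    by auto
qed

lemma three_cases:
  fixes c i m :: nat
  obtains "c < i" | j where "c = i + j" "j < m" | k where "c = i + m + k"
  by (metis add_diff_inverse_nat less_diff_conv2 linorder_not_le add.commute)

lemma nat_int1b: "nat (int a + 1) = Suc a" by simp

lemma nat_int1: "nat (int a + 1 - int b) = a + 1 - b" by simp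
lemma nat_int2: "nat (int a + (int b + 1)) = a + b + 1" by simp
lemma nat_int3: "nat (int a + int b + int c) = a + b + c" by simp
lemma nat_int4: "nat (int a + int b + 1) = a + b + 1" by simp
lemma nat_int5: "nat (int a + int b) = a + b" by simp
lemmas nat_ints = nat_int1 nat_int2 nat_int3 nat_int4 nat_int5 nat_int1b

lemma Bi_comp_nat:
  assumes "1 \<le> i" "1 \<le> sz D" "blue D \<subseteq> arcs (sz D)"
  shows "Bi (bnc_comp C i D) (int c) (int d) \<longleftrightarrow>
   ((int c \<le> int i \<or> int i + int (sz D) \<le> int c) \<and> (int d \<le> int i \<or> int i + int (sz D) \<le> int d) \<and>
     Bi C (if int c \<le> int i then int c else int c + 1 - int (sz D)) (if int d \<le> int i then int d else int d + 1 - int (sz D)) \<and>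
     \<not> ((if int c \<le> int i then int c else int c + 1 - int (sz D)) = int i \<and> (if int d \<le> int i then int d else int d + 1 - int (sz D)) = int i + 1))
   \<or> (int i \<le> int c \<and> int i \<le> int d \<and> Bi D (int c + 1 - int i) (int d + 1 - int i) \<and> \<not> (int c = int i \<and> int d = int i + int (sz D)))
   \<or> (int c = int i \<and> int d = int i + int (sz D) \<and> Bi C (int i) (int i + 1) \<and> Bi D 1 (int (sz D) + 1))"
  unfolding Bi_def[of "bnc_comp C i D"] blue_comp_nat[OF assms]
  using assms by (cases rule: three_cases[where c=c and i=i and m="sz D"]; cases rule: three_cases[where c=d and i=i and m="sz D"]; simp add: Bi_def nat_ints)

lemma Ri_comp_nat:
  assumes "1 \<le> i" "1 \<le> sz D" "red D \<subseteq> arcs (sz D)"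
  shows "Ri (bnc_comp C i D) (int c) (int d) \<longleftrightarrow>
   ((int c \<le> int i \<or> int i + int (sz D) \<le> int c) \<and> (int d \<le> int i \<or> int i + int (sz D) \<le> int d) \<and>
     Ri C (if int c \<le> int i then int c else int c + 1 - int (sz D)) (if int d \<le> int i then int d else int d + 1 - int (sz D)) \<and>
     \<not> ((if int c \<le> int i then int c else int c + 1 - int (sz D)) = int i \<and> (if int d \<le> int i then int d else int d + 1 - int (sz D)) = int i + 1))
   \<or> (int i \<le> int c \<and> int i \<le> int d \<and> Ri D (int c + 1 - int i) (int d + 1 - int i) \<and> \<not> (int c = int i \<and> int d = int i + int (sz D)))
   \<or> (int c = int i \<and> int d = int i + int (sz D) \<and> \<not> Bi C (int i) (int i + 1) \<and> \<not> Ri C (int i) (int i + 1)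
       \<and> \<not> Bi D 1 (int (sz D) + 1) \<and> \<not> Ri D 1 (int (sz D) + 1))"
  unfolding Ri_def[of "bnc_comp C i D"] red_comp_nat[OF assms]
  using assms by (cases rule: three_cases[where c=c and i=i and m="sz D"]; cases rule: three_cases[where c=d and i=i and m="sz D"]; simp add: Bi_def Ri_def nat_ints)

lemma Bi_comp:
  assumes "1 \<le> i" "1 \<le> sz D" "blue D \<subseteq> arcs (sz D)"
  shows "Bi (bnc_comp C i D) c d \<longleftrightarrow>
   ((c \<le> int i \<or> int i + int (sz D) \<le> c) \<and> (d \<le> int i \<or> int i + int (sz D) \<le> d) \<and>
     Bi C (if c \<le> int i then c else c + 1 - int (sz D)) (if d \<le> int i then d else d + 1 - int (sz D)) \<and>
     \<not> ((if c \<le> int i then c else c + 1 - int (sz D)) = int i \<and> (if d \<le> int i then d else d + 1 - int (sz D)) = int i + 1))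
   \<or> (int i \<le> c \<and> int i \<le> d \<and> Bi D (c + 1 - int i) (d + 1 - int i) \<and> \<not> (c = int i \<and> d = int i + int (sz D)))
   \<or> (c = int i \<and> d = int i + int (sz D) \<and> Bi C (int i) (int i + 1) \<and> Bi D 1 (int (sz D) + 1))"
proof (cases "0 \<le> c \<and> 0 \<le> d")
  case False
  then show ?thesis unfolding Bi_def by auto
next
  case True
  then obtain c' d' where cd: "c = int c'" "d = int d'" by (metis nonneg_eq_int)
  show ?thesis unfolding cd by (rule Bi_comp_nat[OF assms])
qed

lemma Ri_comp:
  assumes "1 \<le> i" "1 \<le> sz D" "red D \<subseteq> arcs (sz D)"
  shows "Ri (bnc_comp C i D) c d \<longleftrightarrow>
   ((c \<le> int i \<or> int i + int (sz D) \<le> c) \<and> (d \<le> int i \<or> int i + int (sz D) \<le> d) \<and>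
     Ri C (if c \<le> int i then c else c + 1 - int (sz D)) (if d \<le> int i then d else d + 1 - int (sz D)) \<and>
     \<not> ((if c \<le> int i then c else c + 1 - int (sz D)) = int i \<and> (if d \<le> int i then d else d + 1 - int (sz D)) = int i + 1))
   \<or> (int i \<le> c \<and> int i \<le> d \<and> Ri D (c + 1 - int i) (d + 1 - int i) \<and> \<not> (c = int i \<and> d = int i + int (sz D)))
   \<or> (c = int i \<and> d = int i + int (sz D) \<and> \<not> Bi C (int i) (int i + 1) \<and> \<not> Ri C (int i) (int i + 1)
       \<and> \<not> Bi D 1 (int (sz D) + 1) \<and> \<not> Ri D 1 (int (sz D) + 1))"
proof (cases "0 \<le> c \<and> 0 \<le> d")
  case False
  then show ?thesis unfolding Ri_def by auto
next
  case True
  then obtain c' d' where cd: "c = int c'" "d = int d'" by (metis nonneg_eq_int)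
  show ?thesis unfolding cd by (rule Ri_comp_nat[OF assms])
qed

lemma arcs_Bi: "blue C \<subseteq> arcs n \<longleftrightarrow> (\<forall>a b. Bi C a b \<longrightarrow> 1 \<le> a \<and> a < b \<and> b \<le> int n + 1)"
proof
  assume "blue C \<subseteq> arcs n" then show "\<forall>a b. Bi C a b \<longrightarrow> 1 \<le> a \<and> a < b \<and> b \<le> int n + 1"
    unfolding Bi_def arcs_def by force
next
  assume H: "\<forall>a b. Bi C a b \<longrightarrow> 1 \<le> a \<and> a < b \<and> b \<le> int n + 1"
  show "blue C \<subseteq> arcs n"
  proof
    fix p assume p: "p \<in> blue C"
    obtain a b where ab: "p = (a,b)" by (cases p)
    have "Bi C (int a) (int b)" using p ab by (simp add: Bi_def)
    then show "p \<in> arcs n" using H ab unfolding arcs_def by fastforce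
  qed
qed

lemma arcs_Ri: "red C \<subseteq> arcs n \<longleftrightarrow> (\<forall>a b. Ri C a b \<longrightarrow> 1 \<le> a \<and> a < b \<and> b \<le> int n + 1)"
proof
  assume "red C \<subseteq> arcs n" then show "\<forall>a b. Ri C a b \<longrightarrow> 1 \<le> a \<and> a < b \<and> b \<le> int n + 1"
    unfolding Ri_def arcs_def by force
next
  assume H: "\<forall>a b. Ri C a b \<longrightarrow> 1 \<le> a \<and> a < b \<and> b \<le> int n + 1"
  show "red C \<subseteq> arcs n"
  proof
    fix p assume p: "p \<in> red C"
    obtain a b where ab: "p = (a,b)" by (cases p)
    have "Ri C (int a) (int b)" using p ab by (simp add: Ri_def)
    then show "p \<in> arcs n" using H ab unfolding arcs_def by fastforce
  qed
qed

lemma int_sz_comp: "1 \<le> sz D \<Longrightarrow> int (sz (bnc_comp C i D)) = int (sz C) + int (sz D) - 1"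
  by simp

definition good :: "bnc \<Rightarrow> bool" where
 "good C \<longleftrightarrow> 1 \<le> int (sz C) \<and>
   (\<forall>a b. Bi C a b \<longrightarrow> 1 \<le> a \<and> a < b \<and> b \<le> int (sz C) + 1) \<and>
   (\<forall>a b. Ri C a b \<longrightarrow> 1 \<le> a \<and> a < b \<and> b \<le> int (sz C) + 1 \<and> b \<noteq> a + 1 \<and> \<not> (a = 1 \<and> b = int (sz C) + 1)) \<and>
   (\<forall>a b. \<not> (Bi C a b \<and> Ri C a b)) \<and>
   (\<forall>a b c d. (Bi C a b \<or> Ri C a b) \<longrightarrow> (Bi C c d \<or> Ri C c d) \<longrightarrow> \<not> (a < c \<and> c < b \<and> b < d)) \<and>
   (int (sz C) = 1 \<longrightarrow> Bi C 1 2)"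

lemma good_comp_blue_range:
  assumes C: "good C" and D: "good D" and i: "1 \<le> i" "i \<le> sz C"
  shows "\<forall>a b. Bi (bnc_comp C i D) a b \<longrightarrow> 1 \<le> a \<and> a < b \<and> b \<le> int (sz (bnc_comp C i D)) + 1"
proof -
  have D1: "1 \<le> sz D" and DB: "blue D \<subseteq> arcs (sz D)" using D unfolding good_def arcs_Bi by auto
  obtain I X Y where IJ: "int i = I" "int (sz C) = X" "int (sz D) = Y" by blast
  have ints: "1 \<le> I" "I \<le> X" "1 \<le> Y" using IJ i D1 by auto
  show ?thesis
    unfolding Bi_comp[OF i(1) D1 DB] int_sz_comp[OF D1] IJ
    using C D ints unfolding good_def IJ by (smt (z3))
qed

lemma good_D:
  assumes "good D"
  shows "1 \<le> sz D" "blue D \<subseteq> arcs (sz D)" "red D \<subseteq> arcs (sz D)"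
  using assms unfolding good_def arcs_Bi arcs_Ri by auto

lemma good_comp_size1:
  assumes C: "good C" and D: "good D" and i: "1 \<le> i" "i \<le> sz C"
  shows "int (sz (bnc_comp C i D)) = 1 \<longrightarrow> Bi (bnc_comp C i D) 1 2"
proof -
  note G = good_D[OF D]
  obtain I X Y where IJ: "int i = I" "int (sz C) = X" "int (sz D) = Y" by blast
  have ints: "1 \<le> I" "I \<le> X" "1 \<le> Y" using IJ i G by auto
  show ?thesis
    unfolding Bi_comp[OF i(1) G(1) G(2)] int_sz_comp[OF G(1)] IJ
    using C D ints unfolding good_def IJ by (smt (z3))
qed

lemma good_comp_red_range:
  assumes C: "good C" and D: "good D" and i: "1 \<le> i" "i \<le> sz C"
  shows "\<forall>a b. Ri (bnc_comp C i D) a b \<longrightarrow> 1 \<le> a \<and> a < b \<and> b \<le> int (sz (bnc_comp C i D)) + 1 \<and> b \<noteq> a + 1 \<and> \<not> (a = 1 \<and> b = int (sz (bnc_comp C i D)) + 1)"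
proof -
  note G = good_D[OF D]
  obtain I X Y where IJ: "int i = I" "int (sz C) = X" "int (sz D) = Y" by blast
  have ints: "1 \<le> I" "I \<le> X" "1 \<le> Y" using IJ i G by auto
  show ?thesis
    unfolding Ri_comp[OF i(1) G(1) G(3)] int_sz_comp[OF G(1)] IJ
    using C D ints unfolding good_def IJ by (smt (z3))
qed

lemma good_comp_disj:
  assumes C: "good C" and D: "good D" and i: "1 \<le> i" "i \<le> sz C"
  shows "\<forall>a b. \<not> (Bi (bnc_comp C i D) a b \<and> Ri (bnc_comp C i D) a b)"
proof -
  note G = good_D[OF D]
  obtain I X Y where IJ: "int i = I" "int (sz C) = X" "int (sz D) = Y" by blast
  have ints: "1 \<le> I" "I \<le> X" "1 \<le> Y" using IJ i G by auto
  show ?thesis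
    unfolding Ri_comp[OF i(1) G(1) G(3)] Bi_comp[OF i(1) G(1) G(2)] IJ
    using C D ints unfolding good_def IJ by (smt (z3))
qed

lemma good_comp_nc:
  assumes C: "good C" and D: "good D" and i: "1 \<le> i" "i \<le> sz C"
  shows "\<forall>a b c d. (Bi (bnc_comp C i D) a b \<or> Ri (bnc_comp C i D) a b) \<longrightarrow> (Bi (bnc_comp C i D) c d \<or> Ri (bnc_comp C i D) c d) \<longrightarrow> \<not> (a < c \<and> c < b \<and> b < d)"
proof -
  note G = good_D[OF D]
  obtain I X Y where IJ: "int i = I" "int (sz C) = X" "int (sz D) = Y" by blast
  have ints: "1 \<le> I" "I \<le> X" "1 \<le> Y" using IJ i G by auto
  show ?thesis
    unfolding Ri_comp[OF i(1) G(1) G(3)] Bi_comp[OF i(1) G(1) G(2)] IJ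
    using C D ints unfolding good_def IJ supply [[smt_timeout=150]] by (smt (z3))
qed

lemma good_comp:
  assumes C: "good C" and D: "good D" and i: "1 \<le> i" "i \<le> sz C"
  shows "good (bnc_comp C i D)"
  unfolding good_def using good_comp_size1[OF assms] good_comp_blue_range[OF assms]
    good_comp_red_range[OF assms] good_comp_disj[OF assms] good_comp_nc[OF assms] good_D[OF C] good_D[OF D]
  by simp


lemma Bi_unit: "Bi bnc_unit a b \<longleftrightarrow> a = 1 \<and> b = 2"
  unfolding Bi_def bnc_unit_def by auto

lemma Ri_unit: "Ri bnc_unit a b \<longleftrightarrow> False"
  unfolding Ri_def bnc_unit_def by auto

lemma sz_unit[simp]: "sz bnc_unit = 1" by (simp add: bnc_unit_def)

lemma good_unit: "good bnc_unit"
  unfolding good_def Bi_unit Ri_unit by auto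

lemma BNC_good:
  assumes "C \<in> BNC" shows "good C"
proof (cases "sz C = 1")
  case True
  then have "C = bnc_unit" using assms unfolding BNC_def is_bnc_def by auto
  then show ?thesis using good_unit by simp
next
  case False
  then have H: "sz C \<ge> 2" "blue C \<subseteq> arcs (sz C)" "red C \<subseteq> arcs (sz C)" "blue C \<inter> red C = {}"
    "\<forall>p \<in> blue C \<union> red C. \<forall>q \<in> blue C \<union> red C. \<not> crossing p q" "red C \<subseteq> diagonals (sz C)"
    using assms unfolding BNC_def is_bnc_def by auto
  have r1: "\<forall>a b. Bi C a b \<longrightarrow> 1 \<le> a \<and> a < b \<and> b \<le> int (sz C) + 1" using H(2) arcs_Bi by blast
  have r2: "\<forall>a b. Ri C a b \<longrightarrow> 1 \<le> a \<and> a < b \<and> b \<le> int (sz C) + 1 \<and> b \<noteq> a + 1 \<and> \<not> (a = 1 \<and> b = int (sz C) + 1)"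
  proof (intro allI impI)
    fix a b assume R: "Ri C a b"
    then have ab: "a \<ge> 0" "b \<ge> 0" "(nat a, nat b) \<in> red C" unfolding Ri_def by auto
    then have "(nat a, nat b) \<in> diagonals (sz C)" using H(6) by auto
    then show "1 \<le> a \<and> a < b \<and> b \<le> int (sz C) + 1 \<and> b \<noteq> a + 1 \<and> \<not> (a = 1 \<and> b = int (sz C) + 1)"
      using ab unfolding diagonals_def arcs_def by auto
  qed
  have r3: "\<forall>a b. \<not> (Bi C a b \<and> Ri C a b)" using H(4) unfolding Bi_def Ri_def by auto
  have r4: "\<forall>a b c d. (Bi C a b \<or> Ri C a b) \<longrightarrow> (Bi C c d \<or> Ri C c d) \<longrightarrow> \<not> (a < c \<and> c < b \<and> b < d)"
  proof (intro allI impI notI)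
    fix a b c d assume p: "Bi C a b \<or> Ri C a b" and q: "Bi C c d \<or> Ri C c d" and cr: "a < c \<and> c < b \<and> b < d"
    have "a \<ge> 0" "b \<ge> 0" "c \<ge> 0" "d \<ge> 0" using p q unfolding Bi_def Ri_def by auto
    moreover have "(nat a, nat b) \<in> blue C \<union> red C" "(nat c, nat d) \<in> blue C \<union> red C"
      using p q unfolding Bi_def Ri_def by auto
    ultimately have "\<not> crossing (nat a, nat b) (nat c, nat d)" using H(5) by blast
    then show False using cr \<open>a \<ge> 0\<close> unfolding crossing_def by auto
  qed
  show ?thesis unfolding good_def using H(1) r1 r2 r3 r4 by auto
qed

lemma good_BNC:
  assumes G: "good C" and s: "sz C \<ge> 2" shows "C \<in> BNC"
proof -
  have r2: "\<forall>a b. Ri C a b \<longrightarrow> 1 \<le> a \<and> a < b \<and> b \<le> int (sz C) + 1 \<and> b \<noteq> a + 1 \<and> \<not> (a = 1 \<and> b = int (sz C) + 1)"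
    and r3: "\<forall>a b. \<not> (Bi C a b \<and> Ri C a b)"
    and r4: "\<forall>a b c d. (Bi C a b \<or> Ri C a b) \<longrightarrow> (Bi C c d \<or> Ri C c d) \<longrightarrow> \<not> (a < c \<and> c < b \<and> b < d)"
    using G unfolding good_def by auto
  note D = good_D[OF G]
  have "blue C \<inter> red C = {}"
  proof (rule ccontr)
    assume "blue C \<inter> red C \<noteq> {}"
    then obtain a b where "(a,b) \<in> blue C" "(a,b) \<in> red C" by auto
    then show False using r3 unfolding Bi_def Ri_def by (metis nat_int of_nat_0_le_iff)
  qed
  moreover have "\<forall>p \<in> blue C \<union> red C. \<forall>q \<in> blue C \<union> red C. \<not> crossing p q"
  proof (intro ballI notI)
    fix p q assume p: "p \<in> blue C \<union> red C" and q: "q \<in> blue C \<union> red C" and cr: "crossing p q"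
    obtain a b c d where pq: "p = (a,b)" "q = (c,d)" by (cases p, cases q)
    have P: "Bi C (int a) (int b) \<or> Ri C (int a) (int b)" using p pq unfolding Bi_def Ri_def by auto
    have Q: "Bi C (int c) (int d) \<or> Ri C (int c) (int d)" using q pq unfolding Bi_def Ri_def by auto
    have "(a < c \<and> c < b \<and> b < d) \<or> (c < a \<and> a < d \<and> d < b)" using cr pq unfolding crossing_def by auto
    then show False
    proof
      assume "a < c \<and> c < b \<and> b < d" then show False using r4[rule_format, OF P Q] by simp
    next
      assume "c < a \<and> a < d \<and> d < b" then show False using r4[rule_format, OF Q P] by simp
    qed
  qed
  moreover have "red C \<subseteq> diagonals (sz C)"
  proof
    fix p assume p: "p \<in> red C"
    obtain a b where pq: "p = (a,b)" by (cases p)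
    have "Ri C (int a) (int b)" using p pq unfolding Ri_def by auto
    then show "p \<in> diagonals (sz C)" using r2 pq unfolding diagonals_def arcs_def by fastforce
  qed
  ultimately show ?thesis unfolding BNC_def is_bnc_def using s D by auto
qed

lemma bnc_eqI:
  assumes "sz X = sz Y" "\<And>a b. Bi X a b = Bi Y a b" "\<And>a b. Ri X a b = Ri Y a b"
  shows "X = Y"
proof -
  have "blue X = blue Y" using assms(2) unfolding Bi_def
    by (auto) (metis nat_int of_nat_0_le_iff)+
  moreover have "red X = red Y" using assms(3) unfolding Ri_def
    by (auto) (metis nat_int of_nat_0_le_iff)+
  ultimately show ?thesis using assms(1) by (cases X, cases Y) simp
qed

lemma unit_left:
  assumes G: "good x" shows "bnc_comp bnc_unit 1 x = x"
proof -
  note D = good_D[OF G]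
  obtain X where IJ: "int (sz x) = X" by blast
  have o: "(1::nat) \<le> 1" by simp
  show ?thesis
  proof (rule bnc_eqI)
    show "sz (bnc_comp bnc_unit 1 x) = sz x" by simp
    show "Bi (bnc_comp bnc_unit 1 x) a b = Bi x a b" for a b
      unfolding Bi_comp[OF o D(1) D(2)] Bi_unit of_nat_1 IJ using G unfolding good_def IJ by (smt (z3))
    show "Ri (bnc_comp bnc_unit 1 x) a b = Ri x a b" for a b
      unfolding Ri_comp[OF o D(1) D(3)] Bi_unit Ri_unit of_nat_1 IJ using G unfolding good_def IJ by (smt (z3))
  qed
qed

lemma unit_right:
  assumes G: "good x" and i: "1 \<le> i" "i \<le> sz x" shows "bnc_comp x i bnc_unit = x"
proof -
  note D = good_D[OF good_unit]
  obtain X I where IJ: "int (sz x) = X" "int i = I" by blast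
  have ints: "1 \<le> I" "I \<le> X" using i IJ by auto
  show ?thesis
  proof (rule bnc_eqI)
    show "sz (bnc_comp x i bnc_unit) = sz x" by simp
    show "Bi (bnc_comp x i bnc_unit) a b = Bi x a b" for a b
      unfolding Bi_comp[OF i(1) D(1) D(2)] Bi_unit sz_unit of_nat_1 IJ using G ints unfolding good_def IJ by (smt (z3))
    show "Ri (bnc_comp x i bnc_unit) a b = Ri x a b" for a b
      unfolding Ri_comp[OF i(1) D(1) D(3)] Bi_unit Ri_unit sz_unit of_nat_1 IJ using G ints unfolding good_def IJ by (smt (z3))
  qed
qed

lemma good_R:
  assumes "good C"
  shows "1 \<le> int (sz C) \<and>
   (\<forall>a b. Bi C a b \<longrightarrow> 1 \<le> a \<and> a < b \<and> b \<le> int (sz C) + 1) \<and>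
   (\<forall>a b. Ri C a b \<longrightarrow> 1 \<le> a \<and> a < b \<and> b \<le> int (sz C) + 1 \<and> b \<noteq> a + 1 \<and> \<not> (a = 1 \<and> b = int (sz C) + 1)) \<and>
   (int (sz C) = 1 \<longrightarrow> Bi C 1 2)"
  using assms unfolding good_def by auto


declare [[smt_timeout = 1000, smt_reconstruction_step_timeout = 1000]]

lemma seq_red:
  assumes x: "good x" and y: "good y" and z: "good z"
   and ij: "1 \<le> i" "i \<le> sz x" "1 \<le> j" "j \<le> sz y" and big: "2 \<le> int (sz y)" "2 \<le> int (sz z)"
  shows "Ri (bnc_comp (bnc_comp x i y) (i + j - 1) z) a b = Ri (bnc_comp x i (bnc_comp y j z)) a b"
proof -
  note Z = good_D[OF z] and Y = good_D[OF y]
  note XYg = good_comp[OF x y ij(1,2)] and YZg = good_comp[OF y z ij(3,4)]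
  note YZ = good_D[OF YZg]
  have k: "1 \<le> i + j - 1" "int (i + j - 1) = int i + int j - 1" using ij by auto
  obtain I J X YY ZZ where IJ: "int i = I" "int j = J" "int (sz x) = X" "int (sz y) = YY" "int (sz z) = ZZ" by blast
  have ints: "1 \<le> I" "I \<le> X" "1 \<le> J" "J \<le> YY" "1 \<le> ZZ" using IJ ij Y Z by auto
  have F1: "Bi (bnc_comp x i y) (int (i + j - 1)) (int (i + j - 1) + 1) = Bi y (int j) (int j + 1)"
    unfolding Bi_comp[OF ij(1) Y(1) Y(2)] k(2) IJ using good_R[OF x] good_R[OF y] ints big unfolding IJ by (smt (z3))
  have F2: "Bi (bnc_comp y j z) 1 (int (sz (bnc_comp y j z)) + 1) = Bi y 1 (int (sz y) + 1)"
    unfolding Bi_comp[OF ij(3) Z(1) Z(2)] int_sz_comp[OF Z(1)] IJ using good_R[OF y] good_R[OF z] ints big unfolding IJ by (smt (z3))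
  have F3: "\<not> Ri (bnc_comp x i y) (int (i + j - 1)) (int (i + j - 1) + 1)"
    using good_R[OF XYg] by auto
  have F4: "\<not> Ri (bnc_comp y j z) 1 (int (sz (bnc_comp y j z)) + 1)"
    using good_R[OF YZg] by auto
  show ?thesis
    unfolding Ri_comp[OF k(1) Z(1) Z(3)] Ri_comp[OF ij(1) YZ(1) YZ(3)] F1 F2 F3 F4 simp_thms
    unfolding Ri_comp[OF ij(1) Y(1) Y(3)] Ri_comp[OF ij(3) Z(1) Z(3)]
        int_sz_comp[OF Y(1)] int_sz_comp[OF Z(1)] k(2) IJ
      using good_R[OF x] good_R[OF y] good_R[OF z] ints big unfolding IJ by (smt (verit))
qed

lemma seq_blue:
  assumes x: "good x" and y: "good y" and z: "good z"
   and ij: "1 \<le> i" "i \<le> sz x" "1 \<le> j" "j \<le> sz y"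
  shows "Bi (bnc_comp (bnc_comp x i y) (i + j - 1) z) a b = Bi (bnc_comp x i (bnc_comp y j z)) a b"
proof -
  note Z = good_D[OF z] and Y = good_D[OF y]
  note YZ = good_D[OF good_comp[OF y z ij(3,4)]]
  have k: "1 \<le> i + j - 1" "int (i + j - 1) = int i + int j - 1" using ij by auto
  obtain I J X YY ZZ where IJ: "int i = I" "int j = J" "int (sz x) = X" "int (sz y) = YY" "int (sz z) = ZZ" by blast
  have ints: "1 \<le> I" "I \<le> X" "1 \<le> J" "J \<le> YY" "1 \<le> ZZ" using IJ ij Y Z by auto
  show ?thesis
      unfolding Bi_comp[OF k(1) Z(1) Z(2)] Bi_comp[OF ij(1) YZ(1) YZ(2)] Bi_comp[OF ij(1) Y(1) Y(2)] Bi_comp[OF ij(3) Z(1) Z(2)] 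
        int_sz_comp[OF Y(1)] int_sz_comp[OF Z(1)] k(2) IJ
      using good_R[OF x] good_R[OF y] good_R[OF z] ints unfolding IJ by (smt (verit))
qed

lemma par_blue:
  assumes x: "good x" and y: "good y" and z: "good z"
   and ij: "1 \<le> i" "i < j" "j \<le> sz x"
  shows "Bi (bnc_comp (bnc_comp x i y) (j + sz y - 1) z) a b = Bi (bnc_comp (bnc_comp x j z) i y) a b"
proof -
  note Z = good_D[OF z] and Y = good_D[OF y]
  have k: "1 \<le> j + sz y - 1" "int (j + sz y - 1) = int j + int (sz y) - 1" "1 \<le> j" using ij Y by auto
  obtain I J X YY ZZ where IJ: "int i = I" "int j = J" "int (sz x) = X" "int (sz y) = YY" "int (sz z) = ZZ" by blast
  have ints: "1 \<le> I" "I < J" "J \<le> X" "1 \<le> YY" "1 \<le> ZZ" using IJ ij Y Z by auto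
  show ?thesis
      unfolding Bi_comp[OF k(1) Z(1) Z(2)] Bi_comp[OF ij(1) Y(1) Y(2)] Bi_comp[OF k(3) Z(1) Z(2)] 
        int_sz_comp[OF Y(1)] int_sz_comp[OF Z(1)] k(2) IJ
      using good_R[OF x] good_R[OF y] good_R[OF z] ints unfolding IJ by (smt (verit))
qed

lemma par_red:
  assumes x: "good x" and y: "good y" and z: "good z"
   and ij: "1 \<le> i" "i < j" "j \<le> sz x" and big: "2 \<le> int (sz y)" "2 \<le> int (sz z)"
  shows "Ri (bnc_comp (bnc_comp x i y) (j + sz y - 1) z) a b = Ri (bnc_comp (bnc_comp x j z) i y) a b"
proof -
  note Z = good_D[OF z] and Y = good_D[OF y]
  have k: "1 \<le> j + sz y - 1" "int (j + sz y - 1) = int j + int (sz y) - 1" "1 \<le> j" "i \<le> sz x" using ij Y by auto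
  note XYg = good_comp[OF x y ij(1) k(4)] and XZg = good_comp[OF x z k(3) ij(3)]
  obtain I J X YY ZZ where IJ: "int i = I" "int j = J" "int (sz x) = X" "int (sz y) = YY" "int (sz z) = ZZ" by blast
  have ints: "1 \<le> I" "I < J" "J \<le> X" "1 \<le> YY" "1 \<le> ZZ" using IJ ij Y Z by auto
  have F1: "Bi (bnc_comp x i y) (int (j + sz y - 1)) (int (j + sz y - 1) + 1) = Bi x (int j) (int j + 1)"
    unfolding Bi_comp[OF ij(1) Y(1) Y(2)] k(2) IJ using good_R[OF x] good_R[OF y] ints big unfolding IJ by (smt (verit))
  have F2: "Bi (bnc_comp x j z) (int i) (int i + 1) = Bi x (int i) (int i + 1)"
    unfolding Bi_comp[OF k(3) Z(1) Z(2)] IJ using good_R[OF x] good_R[OF z] ints big unfolding IJ by (smt (verit))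
  have F3: "\<not> Ri (bnc_comp x i y) (int (j + sz y - 1)) (int (j + sz y - 1) + 1)"
    using good_R[OF XYg] by auto
  have F4: "\<not> Ri (bnc_comp x j z) (int i) (int i + 1)"
    using good_R[OF XZg] by auto
  show ?thesis
    unfolding Ri_comp[OF k(1) Z(1) Z(3)] Ri_comp[OF ij(1) Y(1) Y(3)] F1 F2 F3 F4 simp_thms
    unfolding Ri_comp[OF ij(1) Y(1) Y(3)] Ri_comp[OF k(3) Z(1) Z(3)]
        int_sz_comp[OF Y(1)] int_sz_comp[OF Z(1)] k(2) IJ
      using good_R[OF x] good_R[OF y] good_R[OF z] ints big unfolding IJ by (smt (verit))
qed

lemma good_unit_eq:
  assumes G: "good C" and s: "sz C = 1" shows "C = bnc_unit"
proof (rule bnc_eqI)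
  show "sz C = sz bnc_unit" using s by simp
  show "Bi C a b = Bi bnc_unit a b" for a b
    using G s unfolding good_def Bi_unit by (smt (verit) of_nat_1)
  show "Ri C a b = Ri bnc_unit a b" for a b
    using G s unfolding good_def Ri_unit by (smt (verit) of_nat_1)
qed

lemma seq_assoc:
  assumes x: "good x" and y: "good y" and z: "good z"
   and ij: "1 \<le> i" "i \<le> sz x" "1 \<le> j" "j \<le> sz y"
  shows "bnc_comp (bnc_comp x i y) (i + j - 1) z = bnc_comp x i (bnc_comp y j z)"
proof (cases "sz y = 1")
  case True
  then have "y = bnc_unit" "j = 1" using good_unit_eq[OF y] ij by auto
  then show ?thesis using unit_left[OF z] unit_right[OF x ij(1,2)] by simp
next
  case F1: False
  show ?thesis
  proof (cases "sz z = 1")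
    case True
    then have zu: "z = bnc_unit" using good_unit_eq[OF z] by auto
    have "1 \<le> i + j - 1" "i + j - 1 \<le> sz (bnc_comp x i y)" using ij by auto
    then show ?thesis using zu unit_right[OF good_comp[OF x y ij(1,2)]] unit_right[OF y ij(3,4)] by simp
  next
    case False
    have big: "2 \<le> int (sz y)" "2 \<le> int (sz z)" using F1 False good_D[OF y] good_D[OF z] by auto
    show ?thesis
    proof (rule bnc_eqI)
      show "sz (bnc_comp (bnc_comp x i y) (i + j - 1) z) = sz (bnc_comp x i (bnc_comp y j z))"
        using ij good_D[OF y] good_D[OF z] by simp
      show "Bi (bnc_comp (bnc_comp x i y) (i + j - 1) z) a b = Bi (bnc_comp x i (bnc_comp y j z)) a b" for a b
        by (rule seq_blue[OF x y z ij])
      show "Ri (bnc_comp (bnc_comp x i y) (i + j - 1) z) a b = Ri (bnc_comp x i (bnc_comp y j z)) a b" for a b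
        by (rule seq_red[OF x y z ij big])
    qed
  qed
qed

lemma par_assoc:
  assumes x: "good x" and y: "good y" and z: "good z"
   and ij: "1 \<le> i" "i < j" "j \<le> sz x"
  shows "bnc_comp (bnc_comp x i y) (j + sz y - 1) z = bnc_comp (bnc_comp x j z) i y"
proof -
  have j1: "1 \<le> j" "i \<le> sz x" using ij by auto
  show ?thesis
  proof (cases "sz y = 1")
    case True
    then have "y = bnc_unit" using good_unit_eq[OF y] by auto
    have i2: "i \<le> sz (bnc_comp x j z)" using ij good_D[OF z] by simp
    show ?thesis using \<open>y = bnc_unit\<close> True unit_right[OF x ij(1) j1(2)] unit_right[OF good_comp[OF x z j1(1) ij(3)] ij(1) i2] by simp
  next
    case F1: False
    show ?thesis
    proof (cases "sz z = 1")
      case True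
      then have zu: "z = bnc_unit" using good_unit_eq[OF z] by auto
      have "1 \<le> j + sz y - 1" "j + sz y - 1 \<le> sz (bnc_comp x i y)" using ij good_D[OF y] by auto
      then show ?thesis using zu unit_right[OF good_comp[OF x y ij(1) j1(2)]] unit_right[OF x j1(1) ij(3)] by simp
    next
      case False
      have big: "2 \<le> int (sz y)" "2 \<le> int (sz z)" using F1 False good_D[OF y] good_D[OF z] by auto
      show ?thesis
      proof (rule bnc_eqI)
        show "sz (bnc_comp (bnc_comp x i y) (j + sz y - 1) z) = sz (bnc_comp (bnc_comp x j z) i y)"
          using ij good_D[OF y] good_D[OF z] by simp
        show "Bi (bnc_comp (bnc_comp x i y) (j + sz y - 1) z) a b = Bi (bnc_comp (bnc_comp x j z) i y) a b" for a b
          by (rule par_blue[OF x y z ij])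
        show "Ri (bnc_comp (bnc_comp x i y) (j + sz y - 1) z) a b = Ri (bnc_comp (bnc_comp x j z) i y) a b" for a b
          by (rule par_red[OF x y z ij big])
      qed
    qed
  qed
qed

lemma unit_BNC: "bnc_unit \<in> BNC"
  unfolding BNC_def is_bnc_def by simp

lemma comp_BNC:
  assumes x: "x \<in> BNC" and y: "y \<in> BNC" and i: "1 \<le> i" "i \<le> sz x"
  shows "bnc_comp x i y \<in> BNC"
proof (cases "2 \<le> sz (bnc_comp x i y)")
  case True
  then show ?thesis using good_BNC good_comp[OF BNC_good[OF x] BNC_good[OF y] i] by blast
next
  case False
  then have "sz x = 1" "sz y = 1" using good_D[OF BNC_good[OF x]] good_D[OF BNC_good[OF y]] by auto
  then have "x = bnc_unit" "y = bnc_unit" "i = 1" using good_unit_eq BNC_good x y i by auto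
  then show ?thesis using unit_left[OF good_unit] unit_BNC by simp
qed

theorem proposition2p1:
  shows "ns_operad BNC sz bnc_comp bnc_unit"
  unfolding ns_operad_def
proof (intro conjI ballI allI impI)
  show "bnc_unit \<in> BNC" by (rule unit_BNC)
  show "sz bnc_unit = 1" by simp
  fix x y i assume "x \<in> BNC" "y \<in> BNC" "1 \<le> i \<and> i \<le> sz x"
  then show "bnc_comp x i y \<in> BNC" "sz (bnc_comp x i y) = sz x + sz y - 1"
    using comp_BNC by auto
next
  fix x assume "x \<in> BNC" then show "bnc_comp bnc_unit 1 x = x" using unit_left BNC_good by blast
next
  fix x i assume "x \<in> BNC" "1 \<le> i \<and> i \<le> sz x" then show "bnc_comp x i bnc_unit = x"
    using unit_right BNC_good by blast
next
  fix x y z i j assume "x \<in> BNC" "y \<in> BNC" "z \<in> BNC" "1 \<le> i \<and> i \<le> sz x \<and> 1 \<le> j \<and> j \<le> sz y"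
  then show "bnc_comp (bnc_comp x i y) (i + j - 1) z = bnc_comp x i (bnc_comp y j z)"
    using seq_assoc BNC_good by blast
next
  fix x y z i j assume "x \<in> BNC" "y \<in> BNC" "z \<in> BNC" "1 \<le> i \<and> i < j \<and> j \<le> sz x"
  then show "bnc_comp (bnc_comp x i y) (j + sz y - 1) z = bnc_comp (bnc_comp x j z) i y"
    using par_assoc BNC_good by blast
qed

end
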